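(* Let $\Delta>0$, $\nu>0$, $R\in\mathbb{R}$ with $\Delta^2-4\Delta\nu(1+\Delta R)<0$ (so that $p_\pm^2$ are non-real complex conjugates and all eigenvalues $\lambda^{\rm o}_k,\lambda^{\rm e}_k$ are nonzero). Let $p_+$ be a square root of $p_+^2$. Then for all $x,y\in[-1,1]$, $$\sum_{k=1}^{\infty}\left\{\frac{w^{\rm o}_k(x)w^{\rm o}_k(y)}{\lambda^{\rm o}_k}+\frac{w^{\rm e}_k(x)w^{\rm e}_k(y)}{\lambda^{\rm e}_k}\right\} =\frac{1}{\Delta\nu\,\Im(p_+^2-p_-^2)}\,\Im\!\left(\frac{-\cos\big(2p_+-p_+|x-y|\big)+\cos\big(p_+(x+y)\big)}{p_+\sin(2p_+)}\right)=:G(x,y),$$ and $G$ is the Green's function of the boundary value problem $\mathcal{L}v=r$, $v(-1)=v(1)=v_{xx}(-1)=v_{xx}(1)=0$, i.e. for every continuous $r$ on $[-1,1]$ the function $v(x)=\int_{-1}^{1}G(x,y)r(y)\,dy$ is its solution.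
   Context: $\mathcal{L}=1+\Delta R+\Delta\,\partial_{xx}+\Delta\nu\,\partial_{xxxx}$ on $[-1,1]$. $w^{\rm o}_k(x)=\sin(k\pi x)$, $w^{\rm e}_k(x)=\cos((k-\tfrac12)\pi x)$, $\lambda^{\rm o}_k=1+\Delta R-\Delta\pi^2k^2+\Delta\nu\pi^4k^4$, $\lambda^{\rm e}_k=1+\Delta R-\Delta\pi^2(k-\tfrac12)^2+\Delta\nu\pi^4(k-\tfrac12)^4$ for $k\ge1$. $p_\pm^2=\frac{1}{2\nu}\pm\frac{1}{2\Delta\nu}\sqrt{\Delta^2-4\Delta\nu(1+\Delta R)}$, where the square root of the negative discriminant is $i\sqrt{4\Delta\nu(1+\Delta R)-\Delta^2}$. *)

theory Defs
  imports "HOL-Analysis.Analysis"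
begin

text \<open>Eigenfunctions and eigenvalues of
  L = 1 + Delta R + Delta d_xx + Delta nu d_xxxx on [-1,1], for k \<ge> 1.\<close>

definition w_o :: "nat \<Rightarrow> real \<Rightarrow> real" where
  "w_o k x = sin (real k * pi * x)"

definition w_e :: "nat \<Rightarrow> real \<Rightarrow> real" where
  "w_e k x = cos ((real k - 1/2) * pi * x)"

definition lam_o :: "real \<Rightarrow> real \<Rightarrow> real \<Rightarrow> nat \<Rightarrow> real" where
  "lam_o \<Delta> \<nu> R k = 1 + \<Delta> * R - \<Delta> * pi^2 * (real k)^2 + \<Delta> * \<nu> * pi^4 * (real k)^4"

definition lam_e :: "real \<Rightarrow> real \<Rightarrow> real \<Rightarrow> nat \<Rightarrow> real" where
  "lam_e \<Delta> \<nu> R k = 1 + \<Delta> * R - \<Delta> * pi^2 * (real k - 1/2)^2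
                      + \<Delta> * \<nu> * pi^4 * (real k - 1/2)^4"

definition psq_plus :: "real \<Rightarrow> real \<Rightarrow> real \<Rightarrow> complex" where
  "psq_plus \<Delta> \<nu> R = complex_of_real (1 / (2 * \<nu>))
     + \<i> * complex_of_real (sqrt (4 * \<Delta> * \<nu> * (1 + \<Delta> * R) - \<Delta>^2) / (2 * \<Delta> * \<nu>))"

definition psq_minus :: "real \<Rightarrow> real \<Rightarrow> real \<Rightarrow> complex" where
  "psq_minus \<Delta> \<nu> R = complex_of_real (1 / (2 * \<nu>))
     - \<i> * complex_of_real (sqrt (4 * \<Delta> * \<nu> * (1 + \<Delta> * R) - \<Delta>^2) / (2 * \<Delta> * \<nu>))"

text \<open>The closed-form Green's function, with p a chosen square root of p_plus^2.\<close>

definition Green :: "real \<Rightarrow> real \<Rightarrow> real \<Rightarrow> complex \<Rightarrow> real \<Rightarrow> real \<Rightarrow> real" where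
  "Green \<Delta> \<nu> R p x y =
     1 / (\<Delta> * \<nu> * Im (psq_plus \<Delta> \<nu> R - psq_minus \<Delta> \<nu> R)) *
     Im ((- cos (2 * p - p * complex_of_real \<bar>x - y\<bar>) + cos (p * complex_of_real (x + y)))
         / (p * sin (2 * p)))"

end

theory Submission
  imports Defs
begin

definition Sf :: "complex \<Rightarrow> complex \<Rightarrow> real \<Rightarrow> complex" where
  "Sf al be t = sin (al * of_real t + be)"
definition Cf :: "complex \<Rightarrow> complex \<Rightarrow> real \<Rightarrow> complex" where
  "Cf al be t = cos (al * of_real t + be)"

lemma Sf_deriv: "((Sf al be) has_vector_derivative (al * Cf al be t)) (at t within X)"
proof -
  have "((\<lambda>z. sin (al * z + be)) has_field_derivative (cos (al * of_real t + be) * al)) (at (of_real t))"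
    by (auto intro!: derivative_eq_intros)
  from has_vector_derivative_real_field[OF this] show ?thesis
    unfolding Sf_def Cf_def by (simp add: mult.commute)
qed

lemma Cf_deriv: "((Cf al be) has_vector_derivative (- (al * Sf al be t))) (at t within X)"
proof -
  have "((\<lambda>z. cos (al * z + be)) has_field_derivative (- sin (al * of_real t + be) * al)) (at (of_real t))"
    by (auto intro!: derivative_eq_intros)
  from has_vector_derivative_real_field[OF this] show ?thesis
    unfolding Sf_def Cf_def by (simp add: mult.commute)
qed

lemma Sf_cont[continuous_intros]: "continuous_on S (Sf al be)"
  unfolding Sf_def by (intro continuous_intros)

lemma int_Im_lin:
  assumes "f integrable_on S"
  shows "integral S (\<lambda>y. k * Im (C * f y)) = k * Im (C * integral S f)"
proof -
  have bl: "bounded_linear (\<lambda>z::complex. Im (C * z))"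
    by (intro bounded_linear_compose[OF bounded_linear_Im] bounded_linear_mult_right)
  have "integral S ((\<lambda>z. Im (C * z)) \<circ> f) = Im (C * integral S f)" by (rule integral_linear[OF assms bl])
  hence "integral S (\<lambda>y. Im (C * f y)) = Im (C * integral S f)" by (simp add: o_def)
  thus ?thesis using integral_cmul[where c=k and f="\<lambda>y. Im (C * f y)" and S=S] by simp
qed

lemma vd_Im:
  assumes "(F has_vector_derivative F') (at x within S)"
  shows "((\<lambda>x. k * Im (C * F x)) has_real_derivative (k * Im (C * F'))) (at x within S)"
proof -
  have bl: "bounded_linear (\<lambda>z::complex. k * Im (C * z))"
    by (intro bounded_linear_compose[OF bounded_linear_mult_right]
          bounded_linear_compose[OF bounded_linear_Im] bounded_linear_mult_right)
  show ?thesis unfolding has_real_derivative_iff_has_vector_derivative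
    using bounded_linear.has_vector_derivative[OF bl assms] by simp
qed

lemma deriv_transfer:
  assumes "(f has_real_derivative d) (at x within S)" "x \<in> S" "\<And>y. y \<in> S \<Longrightarrow> f y = g y"
  shows "(g has_real_derivative d) (at x within S)"
  by (rule has_field_derivative_transform_within[OF assms(1) zero_less_one assms(2)]) (use assms(3) in auto)

locale gf =
  fixes D nu R :: real and p :: complex
  assumes hD: "D > 0" and hnu: "nu > 0"
    and hdisc: "D^2 - 4 * D * nu * (1 + D * R) < 0"
    and hp: "p^2 = psq_plus D nu R"
begin

definition "c0 = 1 + D * R"
definition "sd = sqrt (4 * D * nu * (1 + D * R) - D^2)"
definition "a0 = 1 / (2 * nu)"
definition "b0 = sd / (2 * D * nu)"
definition "K = 1 / sd"
definition "cc = 2 / (p * sin (2 * p))"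

lemma sd_pos: "sd > 0" using hdisc by (simp add: sd_def)
lemma sd_sq: "sd^2 = 4 * D * nu * c0 - D^2"
  using hdisc by (simp add: sd_def c0_def)
lemma c0_pos: "c0 > 0"
proof -
  have "4 * D * nu * c0 > D^2" using hdisc by (simp add: c0_def)
  moreover have "D^2 > 0" using hD by simp
  ultimately have X: "0 < (4*D*nu) * c0" by linarith
  have "4*D*nu > 0" using hD hnu by simp
  from zero_less_mult_pos[OF X this] show ?thesis .
qed
lemma b0_pos: "b0 > 0" using sd_pos hD hnu by (simp add: b0_def)

lemma p2: "p^2 = Complex a0 b0"
  using hp by (simp add: psq_plus_def a0_def b0_def sd_def complex_eq_iff)

lemma K_eq: "1 / (D * nu * Im (psq_plus D nu R - psq_minus D nu R)) = K"
  using hD hnu by (simp add: psq_plus_def psq_minus_def K_def sd_def)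

lemma a0b0: "D * nu * (a0^2 + b0^2) = c0" "2 * D * nu * a0 = D"
proof -
  have "D * nu * (a0^2 + b0^2) = D / (4*nu) + sd^2 / (4 * D * nu)"
    using hD hnu by (simp add: a0_def b0_def power2_eq_square field_simps)
  also have "\<dots> = c0" unfolding sd_sq using hD hnu by (simp add: field_simps power2_eq_square)
  finally show "D * nu * (a0^2 + b0^2) = c0" .
  show "2 * D * nu * a0 = D" using hnu by (simp add: a0_def)
qed

lemma char_eq: "of_real (D * nu) * p^4 - of_real D * p^2 + of_real c0 = (0::complex)"
proof -
  have e: "p^4 = (p^2)^2" by simp
  have r: "D*nu*(a0*a0 - b0*b0) - D*a0 + c0 = 0"
  proof -
    have h2: "D*a0 = 2*(D*nu*(a0*a0))" using a0b0(2) by (metis mult.assoc mult.commute)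
    have h1: "D*nu*(a0*a0) + D*nu*(b0*b0) = c0" using a0b0(1) by (simp add: power2_eq_square distrib_left)
    have "D*nu*(a0*a0 - b0*b0) = D*nu*(a0*a0) - D*nu*(b0*b0)" by (simp add: right_diff_distrib)
    thus ?thesis using h1 h2 by linarith
  qed
  have i: "D*nu*(2*a0*b0) - D*b0 = 0"
  proof -
    have "D*nu*(2*a0*b0) = (2*D*nu*a0)*b0" by simp
    thus ?thesis using a0b0(2) by simp
  qed
  show ?thesis unfolding e p2 using r i
    by (simp add: complex_eq_iff power2_eq_square algebra_simps)
qed

lemma mu_eq: "D * nu * ((a0 - w)^2 + b0^2) = c0 - D * w + D * nu * w^2"
proof -
  have "D * nu * ((a0 - w)^2 + b0^2) = D*nu*(a0^2+b0^2) - (2*D*nu*a0)*w + D*nu*w^2"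
    by (simp add: power2_eq_square algebra_simps)
  thus ?thesis using a0b0 by simp
qed

lemma p_nz: "p \<noteq> 0" using p2 b0_pos by (auto simp: complex_eq_iff)

lemma sin2p_nz: "sin (2 * p) \<noteq> 0"
proof
  assume "sin (2*p) = 0"
  then obtain n :: int where n: "2 * p = of_real (n * pi)" by (auto simp: sin_eq_0)
  hence "p = of_real (n * pi / 2)" by (simp add: field_simps)
  hence "Im (p^2) = 0" by (simp only: of_real_power[symmetric] Im_complex_of_real)
  thus False using p2 b0_pos by simp
qed

lemma cc_mult: "cc * (p * sin (2 * p)) = 2"
  using p_nz sin2p_nz by (simp add: cc_def)


definition "fa = Sf (-p) p"
definition "fb = Sf p p"
definition "fa' = (\<lambda>t. -p * Cf (-p) p t)"
definition "fb' = (\<lambda>t. p * Cf p p t)"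
definition "Ar r x = integral {-1..x} (\<lambda>y. fb y * of_real (r y))"
definition "Br r x = integral {x..1} (\<lambda>y. fa y * of_real (r y))"
definition "Vr r x = fa x * Ar r x + fb x * Br r x"
definition "V1 r x = fa' x * Ar r x + fb' x * Br r x"

lemma fa_d: "(fa has_vector_derivative fa' t) (at t within X)"
  unfolding fa_def fa'_def using Sf_deriv[of "-p" p t X] by simp
lemma fb_d: "(fb has_vector_derivative fb' t) (at t within X)"
  unfolding fb_def fb'_def using Sf_deriv by simp
lemma fa'_d: "(fa' has_vector_derivative (- (p^2) * fa t)) (at t within X)"
proof -
  have "((\<lambda>t. -p * Cf (-p) p t) has_vector_derivative (-p * (- (-p * Sf (-p) p t)))) (at t within X)"
    by (intro has_vector_derivative_mult_right Cf_deriv)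
  thus ?thesis unfolding fa'_def fa_def by (simp add: power2_eq_square mult.assoc)
qed
lemma fb'_d: "(fb' has_vector_derivative (- (p^2) * fb t)) (at t within X)"
proof -
  have "((\<lambda>t. p * Cf p p t) has_vector_derivative (p * (- (p * Sf p p t)))) (at t within X)"
    by (intro has_vector_derivative_mult_right Cf_deriv)
  thus ?thesis unfolding fb'_def fb_def by (simp add: power2_eq_square mult.assoc)
qed

lemma wronsk: "fa' t * fb t - fb' t * fa t = - p * sin (2 * p)"
proof -
  have "sin ((p * of_real t + p) + (-p * of_real t + p)) = sin (2 * p)" by (simp add: algebra_simps)
  moreover have "sin ((p * of_real t + p) + (-p * of_real t + p)) =
      sin (p * of_real t + p) * cos (-p * of_real t + p) + cos (p * of_real t + p) * sin (-p * of_real t + p)"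
    by (rule sin_add)
  ultimately show ?thesis unfolding fa'_def fb'_def fa_def fb_def Sf_def Cf_def
    by (simp add: algebra_simps)
qed

lemma fa1: "fa 1 = 0" by (simp add: fa_def Sf_def)
lemma fbm1: "fb (-1) = 0" by (simp add: fb_def Sf_def)


end

context gf begin
lemma green_form: "Green D nu R p x y = K * Im (cc * fb (min x y) * fa (max x y))"
proof -
  have num: "- cos (2 * p - p * of_real \<bar>x - y\<bar>) + cos (p * of_real (x + y)) = 2 * fb (min x y) * fa (max x y)"
  proof (cases "x \<le> y")
    case True
    have mm: "min x y = x" "max x y = y" "\<bar>x - y\<bar> = y - x" using True by auto
    have c: "cos (p * of_real (x + y)) - cos (2 * p - p * of_real (y - x)) =
       2 * sin ((p * of_real (x + y) + (2 * p - p * of_real (y - x))) / 2) *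
           sin (((2 * p - p * of_real (y - x)) - p * of_real (x + y)) / 2)" by (rule cos_diff_cos)
    have A: "(p * of_real (x + y) + (2 * p - p * of_real (y - x))) / 2 = p * of_real x + p"
      by (simp add: field_simps)
    have B: "((2 * p - p * of_real (y - x)) - p * of_real (x + y)) / 2 = - p * of_real y + p"
      by (simp add: field_simps)
    have c2: "cos (p * of_real (x + y)) - cos (2 * p - p * of_real (y - x)) =
       2 * sin (p * of_real x + p) * sin (- p * of_real y + p)" using c unfolding A B .
    show ?thesis unfolding mm fa_def fb_def Sf_def using c2 by (simp add: algebra_simps)
  next
    case False
    have mm: "min x y = y" "max x y = x" "\<bar>x - y\<bar> = x - y" using False by auto
    have c: "cos (p * of_real (x + y)) - cos (2 * p - p * of_real (x - y)) =
       2 * sin ((p * of_real (x + y) + (2 * p - p * of_real (x - y))) / 2) *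
           sin (((2 * p - p * of_real (x - y)) - p * of_real (x + y)) / 2)" by (rule cos_diff_cos)
    have A: "(p * of_real (x + y) + (2 * p - p * of_real (x - y))) / 2 = p * of_real y + p"
      by (simp add: field_simps)
    have B: "((2 * p - p * of_real (x - y)) - p * of_real (x + y)) / 2 = - p * of_real x + p"
      by (simp add: field_simps)
    have c2: "cos (p * of_real (x + y)) - cos (2 * p - p * of_real (x - y)) =
       2 * sin (p * of_real y + p) * sin (- p * of_real x + p)" using c unfolding A B .
    show ?thesis unfolding mm fa_def fb_def Sf_def using c2 by (simp add: algebra_simps)
  qed
  show ?thesis unfolding Green_def K_eq num cc_def by (simp add: field_simps)
qed

lemma green_sym: "Green D nu R p x y = Green D nu R p y x"
  unfolding green_form by (simp add: min.commute max.commute)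


end

lemma Im_mult_ofr: "Im (z * complex_of_real r) = Im z * r" by simp
context gf begin
lemma green_cont:
  assumes "continuous_on {-1..1} r"
  shows "continuous_on {-1..1} (\<lambda>y. Green D nu R p x y * r y)"
  unfolding green_form fa_def fb_def Sf_def by (intro continuous_intros assms)

lemma fbr_cont: "continuous_on {-1..1} r \<Longrightarrow> continuous_on {-1..1} (\<lambda>y. fb y * of_real (r y))"
  unfolding fb_def Sf_def by (intro continuous_intros)
lemma far_cont: "continuous_on {-1..1} r \<Longrightarrow> continuous_on {-1..1} (\<lambda>y. fa y * of_real (r y))"
  unfolding fa_def Sf_def by (intro continuous_intros)

lemma repr:
  assumes r: "continuous_on {-1..1} r" and x: "x \<in> {-1..1}"
  shows "integral {-1..1} (\<lambda>y. Green D nu R p x y * r y) = K * Im (cc * Vr r x)"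
proof -
  let ?g = "\<lambda>y. Green D nu R p x y * r y"
  have gi: "?g integrable_on {-1..1}" by (rule integrable_continuous_real[OF green_cont[OF r]])
  have c: "integral {-1..x} ?g + integral {x..1} ?g = integral {-1..1} ?g"
    using x gi by (intro Henstock_Kurzweil_Integration.integral_combine) auto
  have i1: "(\<lambda>y. fb y * of_real (r y)) integrable_on {-1..x}"
    using x by (intro integrable_subinterval_real[OF integrable_continuous_real[OF fbr_cont[OF r]]]) auto
  have i2: "(\<lambda>y. fa y * of_real (r y)) integrable_on {x..1}"
    using x by (intro integrable_subinterval_real[OF integrable_continuous_real[OF far_cont[OF r]]]) auto
  have e1: "integral {-1..x} ?g = integral {-1..x} (\<lambda>y. K * Im ((cc * fa x) * (fb y * of_real (r y))))"
  proof (rule integral_cong)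
    fix y assume y: "y \<in> {-1..x}"
    have mm: "min x y = y" "max x y = x" using y by auto
    have "cc * fb y * fa x * of_real (r y) = cc * fa x * (fb y * of_real (r y))" by (simp add: mult_ac)
    hence "Im (cc * fb y * fa x) * r y = Im (cc * fa x * (fb y * of_real (r y)))" by (metis Im_mult_ofr)
    thus "Green D nu R p x y * r y = K * Im (cc * fa x * (fb y * of_real (r y)))"
      unfolding green_form mm by simp
  qed
  have e2: "integral {x..1} ?g = integral {x..1} (\<lambda>y. K * Im ((cc * fb x) * (fa y * of_real (r y))))"
  proof (rule integral_cong)
    fix y assume y: "y \<in> {x..1}"
    have mm: "min x y = x" "max x y = y" using y by auto
    have "cc * fb x * fa y * of_real (r y) = cc * fb x * (fa y * of_real (r y))" by (simp add: mult_ac)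
    hence "Im (cc * fb x * fa y) * r y = Im (cc * fb x * (fa y * of_real (r y)))" by (metis Im_mult_ofr)
    thus "Green D nu R p x y * r y = K * Im (cc * fb x * (fa y * of_real (r y)))"
      unfolding green_form mm by simp
  qed
  have "integral {-1..1} ?g = K * Im ((cc * fa x) * Ar r x) + K * Im ((cc * fb x) * Br r x)"
    unfolding c[symmetric] e1 e2 int_Im_lin[OF i1] int_Im_lin[OF i2] Ar_def Br_def ..
  also have "\<dots> = K * Im (cc * Vr r x)" unfolding Vr_def by (simp add: algebra_simps)
  finally show ?thesis .
qed

lemma Ar_d:
  assumes r: "continuous_on {-1..1} r" and x: "x \<in> {-1..1}"
  shows "(Ar r has_vector_derivative (fb x * of_real (r x))) (at x within {-1..1})"
  unfolding Ar_def by (rule integral_has_vector_derivative[OF fbr_cont[OF r] x])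

lemma Br_d:
  assumes r: "continuous_on {-1..1} r" and x: "x \<in> {-1..1}"
  shows "(Br r has_vector_derivative (- (fa x * of_real (r x)))) (at x within {-1..1})"
proof -
  let ?f = "\<lambda>y. fa y * of_real (r y)"
  have fi: "?f integrable_on {-1..1}" by (rule integrable_continuous_real[OF far_cont[OF r]])
  have "((\<lambda>u. integral {-1..1} ?f - integral {-1..u} ?f) has_vector_derivative (0 - ?f x)) (at x within {-1..1})"
    by (intro has_vector_derivative_diff has_vector_derivative_const integral_has_vector_derivative[OF far_cont[OF r] x])
  moreover have "\<And>u. u \<in> {-1..1} \<Longrightarrow> integral {-1..1} ?f - integral {-1..u} ?f = Br r u"
  proof -
    fix u :: real assume u: "u \<in> {-1..1}"
    have "integral {-1..u} ?f + integral {u..1} ?f = integral {-1..1} ?f"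
      using u fi by (intro Henstock_Kurzweil_Integration.integral_combine) auto
    thus "integral {-1..1} ?f - integral {-1..u} ?f = Br r u" unfolding Br_def by (simp add: algebra_simps)
  qed
  ultimately have "(Br r has_vector_derivative (0 - ?f x)) (at x within {-1..1})"
    using has_vector_derivative_transform_within[OF _ zero_less_one x] by blast
  thus ?thesis by simp
qed


end

context gf begin
lemma Vr_d:
  assumes r: "continuous_on {-1..1} r" and x: "x \<in> {-1..1}"
  shows "(Vr r has_vector_derivative V1 r x) (at x within {-1..1})"
proof -
  have "(Vr r has_vector_derivative
     ((fa x * (fb x * of_real (r x)) + fa' x * Ar r x) + (fb x * (- (fa x * of_real (r x))) + fb' x * Br r x)))
     (at x within {-1..1})"
    unfolding Vr_def[abs_def]
    by (intro has_vector_derivative_add has_vector_derivative_mult fa_d fb_d Ar_d[OF r x] Br_d[OF r x])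
  thus ?thesis unfolding V1_def by (simp add: algebra_simps)
qed


end

context gf begin
lemma V1_d:
  assumes r: "continuous_on {-1..1} r" and x: "x \<in> {-1..1}"
  shows "(V1 r has_vector_derivative (- (p^2) * Vr r x - p * sin (2 * p) * of_real (r x))) (at x within {-1..1})"
proof -
  have "(V1 r has_vector_derivative
     ((fa' x * (fb x * of_real (r x)) + (- (p^2) * fa x) * Ar r x) + (fb' x * (- (fa x * of_real (r x))) + (- (p^2) * fb x) * Br r x)))
     (at x within {-1..1})"
    unfolding V1_def[abs_def]
    by (intro has_vector_derivative_add has_vector_derivative_mult fa'_d fb'_d Ar_d[OF r x] Br_d[OF r x])
  moreover have "(fa' x * (fb x * of_real (r x)) + (- (p^2) * fa x) * Ar r x) + (fb' x * (- (fa x * of_real (r x))) + (- (p^2) * fb x) * Br r x)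
      = - (p^2) * Vr r x + (fa' x * fb x - fb' x * fa x) * of_real (r x)"
    unfolding Vr_def by (simp add: algebra_simps)
  ultimately show ?thesis unfolding wronsk by simp
qed


end

context gf begin
lemma Vr_m1: "Vr r (-1) = 0" by (simp add: Vr_def Ar_def fbm1)
lemma Vr_1: "Vr r 1 = 0" by (simp add: Vr_def Br_def fa1)

end

lemma sc2:
  fixes f t :: real
  assumes "n \<ge> 1"
  shows "f * sin (real n * t) * cos t ^ Suc m =
     (1/2) * (f * sin (real (Suc n) * t) * cos t ^ m) + (1/2) * (f * sin (real (n - 1) * t) * cos t ^ m)"
proof -
  have "sin (real n * t) * cos t = (sin (real n * t + t) + sin (real n * t - t)) / 2"
    by (rule sin_times_cos)
  moreover have "real n * t + t = real (Suc n) * t" by (simp add: algebra_simps)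
  moreover have "real n * t - t = real (n - 1) * t" using assms by (simp add: algebra_simps of_nat_diff)
  ultimately have e: "sin (real n * t) * cos t = (sin (real (Suc n) * t) + sin (real (n - 1) * t)) / 2"
    by simp
  have "f * sin (real n * t) * cos t ^ Suc m = f * cos t ^ m * (sin (real n * t) * cos t)"
    by (simp add: algebra_simps)
  also have "\<dots> = (1/2) * (f * sin (real (Suc n) * t) * cos t ^ m) + (1/2) * (f * sin (real (n - 1) * t) * cos t ^ m)"
    unfolding e by (simp add: algebra_simps)
  finally show ?thesis .
qed

lemma lin2:
  fixes f g :: "real \<Rightarrow> real"
  assumes "f integrable_on S" "g integrable_on S"
  shows "integral S (\<lambda>x. a * f x + b * g x) = a * integral S f + b * integral S g"
proof -
  have "(\<lambda>x. a * f x) integrable_on S" "(\<lambda>x. b * g x) integrable_on S"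
    using integrable_cmul[OF assms(1), where c=a] integrable_cmul[OF assms(2), where c=b] by simp_all
  thus ?thesis using integral_add by (simp add: integral_add)
qed

lemma compl_step:
  fixes F :: "real \<Rightarrow> real"
  assumes cF: "continuous_on {-1..1} F"
    and h: "\<And>n. integral {-1..1} (\<lambda>x. F x * sin (real n * (pi * (x + 1) / 2))) = 0"
  shows "integral {-1..1} (\<lambda>x. F x * sin (real n * (pi * (x + 1) / 2)) * cos (pi * (x + 1) / 2) ^ m) = 0"
proof (induction m arbitrary: n)
  case 0
  then show ?case using h by simp
next
  case (Suc m)
  show ?case
  proof (cases "n = 0")
    case True
    then show ?thesis by simp
  next
    case False
    let ?t = "\<lambda>x::real. pi * (x + 1) / 2"
    have e: "(\<lambda>x. F x * sin (real n * ?t x) * cos (?t x) ^ Suc m) = (\<lambda>x.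
       (1/2) * (F x * sin (real (Suc n) * ?t x) * cos (?t x) ^ m) +
       (1/2) * (F x * sin (real (n - 1) * ?t x) * cos (?t x) ^ m))"
      using False by (intro ext sc2) auto
    have i: "(\<lambda>x. F x * sin (real k * ?t x) * cos (?t x) ^ m) integrable_on {-1..1}" for k
      by (intro integrable_continuous_real continuous_intros cF) auto
    show ?thesis unfolding e lin2[OF i i] Suc.IH by simp
  qed
qed

lemma compl_poly:
  fixes F :: "real \<Rightarrow> real"
  assumes cF: "continuous_on {-1..1} F"
    and h: "\<And>n. integral {-1..1} (\<lambda>x. F x * sin (real n * (pi * (x + 1) / 2))) = 0"
  shows "integral {-1..1} (\<lambda>x. F x * sin (pi * (x + 1) / 2) * (\<Sum>i\<le>N. a i * cos (pi * (x + 1) / 2) ^ i)) = 0"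
proof -
  let ?t = "\<lambda>x::real. pi * (x + 1) / 2"
  have e: "F x * sin (?t x) * (\<Sum>i\<le>N. a i * cos (?t x) ^ i) = (\<Sum>i\<le>N. a i * (F x * sin (real 1 * ?t x) * cos (?t x) ^ i))" for x
    by (simp add: sum_distrib_left algebra_simps)
  have i: "(\<lambda>x. a i * (F x * sin (real 1 * ?t x) * cos (?t x) ^ i)) integrable_on {-1..1}" for i
    by (intro integrable_continuous_real continuous_intros cF) auto
  have "integral {-1..1} (\<lambda>x. \<Sum>i\<le>N. a i * (F x * sin (real 1 * ?t x) * cos (?t x) ^ i)) =
        (\<Sum>i\<le>N. integral {-1..1} (\<lambda>x. a i * (F x * sin (real 1 * ?t x) * cos (?t x) ^ i)))"
    by (rule integral_sum) (use i in auto)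
  also have "\<dots> = 0"
  proof (rule sum.neutral, rule ballI)
    fix i
    have ii: "(\<lambda>x. F x * sin (real 1 * ?t x) * cos (?t x) ^ i) integrable_on {-1..1}"
      by (intro integrable_continuous_real continuous_intros cF) auto
    show "integral {-1..1} (\<lambda>x. a i * (F x * sin (real 1 * ?t x) * cos (?t x) ^ i)) = 0"
      using integral_mult[OF ii, of "a i"] compl_step[OF cF h, of 1 i] by simp
  qed
  finally show ?thesis unfolding e .
qed

lemma t_range:
  fixes z :: real
  assumes "z \<in> {-1..1}"
  shows "0 \<le> pi * (z + 1) / 2" "pi * (z + 1) / 2 \<le> pi"
proof -
  have "0 \<le> z + 1" "z + 1 \<le> 2" using assms by auto
  thus "0 \<le> pi * (z + 1) / 2" by simp
  have "pi * (z + 1) \<le> pi * 2" using \<open>z + 1 \<le> 2\<close> pi_ge_zero by (intro mult_left_mono) auto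
  thus "pi * (z + 1) / 2 \<le> pi" by simp
qed

lemma t_range_strict:
  fixes z :: real
  assumes "-1 < z" "z < 1"
  shows "0 < pi * (z + 1) / 2" "pi * (z + 1) / 2 < pi"
proof -
  have "0 < z + 1" "z + 1 < 2" using assms by auto
  thus "0 < pi * (z + 1) / 2" by simp
  have "pi * (z + 1) < pi * 2" using \<open>z + 1 < 2\<close> pi_gt_zero by (intro mult_strict_left_mono) auto
  thus "pi * (z + 1) / 2 < pi" by simp
qed

lemma completeness:
  fixes F :: "real \<Rightarrow> real"
  assumes cF: "continuous_on {-1..1} F"
    and h: "\<And>n. integral {-1..1} (\<lambda>x. F x * sin (real n * (pi * (x + 1) / 2))) = 0"
    and x: "-1 < x" "x < 1"
  shows "F x = 0"
proof -
  let ?t = "\<lambda>x::real. pi * (x + 1) / 2"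
  define g where "g u = F (- 2 * arcsin u / pi)" for u
  have gc: "continuous_on {-1..1} g"
  proof -
    have "continuous_on {-1..1} (\<lambda>u. - 2 * arcsin u / pi)"
      by (intro continuous_intros) auto
    moreover have "(\<lambda>u. - 2 * arcsin u / pi) ` {-1..1} \<subseteq> {-1..1}"
    proof
      fix v assume "v \<in> (\<lambda>u. - 2 * arcsin u / pi) ` {-1..1}"
      then obtain u where u: "u \<in> {-1..1}" "v = - 2 * arcsin u / pi" by auto
      have "arcsin u \<le> pi/2" using u(1) by (intro arcsin_ubound) auto
      moreover have "- (pi/2) \<le> arcsin u" using u(1) by (intro arcsin_lbound) auto
      ultimately have ab: "\<bar>arcsin u\<bar> \<le> pi / 2" by simp
      have "\<bar>v\<bar> = 2 * \<bar>arcsin u\<bar> / pi" using u(2) pi_gt_zero by (simp add: abs_divide abs_mult)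
      also have "\<dots> \<le> 2 * (pi / 2) / pi" using ab pi_gt_zero by (intro divide_right_mono mult_left_mono) auto
      also have "\<dots> = 1" by simp
      finally show "v \<in> {-1..1}" by (simp add: abs_le_iff)
    qed
    ultimately show ?thesis unfolding g_def by (intro continuous_on_compose2[OF cF]) auto
  qed
  have gcos: "g (cos (?t z)) = F z" if z: "z \<in> {-1..1}" for z :: real
  proof -
    have "cos (?t z) = cos (pi * z / 2 + pi / 2)" by (simp add: algebra_simps add_divide_distrib)
    also have "\<dots> = - sin (pi * z / 2)" by (simp add: cos_add)
    finally have c: "cos (?t z) = - sin (pi * z / 2)" .
    have "- pi \<le> pi * z" using mult_left_mono[of "-1" z pi] z pi_ge_zero by simp
    moreover have "pi * z \<le> pi" using mult_left_mono[of z 1 pi] z pi_ge_zero by simp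
    ultimately have as: "arcsin (sin (pi * z / 2)) = pi * z / 2"
      by (intro arcsin_sin) auto
    have am: "arcsin (- sin (pi * z / 2)) = - arcsin (sin (pi * z / 2))" by (rule arcsin_minus) auto
    have "- 2 * arcsin (cos (?t z)) / pi = z" unfolding c am as using pi_gt_zero by simp
    thus ?thesis unfolding g_def by simp
  qed
  have cosr: "cos (?t z) \<in> {-1..1}" for z :: real by simp
  have sin_nn: "0 \<le> sin (?t z)" "sin (?t z) \<le> 1" if "z \<in> {-1..1}" for z :: real
    using t_range[OF that] by (auto intro!: sin_ge_zero)
  define I where "I = integral {-1..1} (\<lambda>x. F x ^ 2 * sin (?t x))"
  define M where "M = integral {-1..1} (\<lambda>x. \<bar>F x\<bar>)"
  have M0: "M \<ge> 0" unfolding M_def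
    by (intro integral_nonneg integrable_continuous_real continuous_intros cF) auto
  have Ile: "I \<le> e * M" if e: "e > 0" for e :: real
  proof -
    obtain P where P: "real_polynomial_function P" "\<And>u. u \<in> {-1..1} \<Longrightarrow> \<bar>g u - P u\<bar> < e"
      using Stone_Weierstrass_real_polynomial_function[OF compact_Icc gc e] by blast
    obtain a N where aN: "P = (\<lambda>x. \<Sum>i\<le>N. a i * x ^ i)" using P(1) real_polynomial_function_iff_sum by blast
    have close: "\<bar>F z - P (cos (?t z))\<bar> < e" if z: "z \<in> {-1..1}" for z :: real
      using P(2)[OF cosr[of z]] gcos[OF z] by simp
    have z0: "integral {-1..1} (\<lambda>x. F x * sin (?t x) * P (cos (?t x))) = 0"
      unfolding aN using compl_poly[OF cF h] by simp
    have i1: "(\<lambda>x. F x * sin (?t x) * P (cos (?t x))) integrable_on {-1..1}"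
      unfolding aN by (intro integrable_continuous_real continuous_intros cF) auto
    have i2: "(\<lambda>x. F x ^ 2 * sin (?t x)) integrable_on {-1..1}"
      by (intro integrable_continuous_real continuous_intros cF) auto
    have i3: "(\<lambda>x. F x * sin (?t x) * (F x - P (cos (?t x)))) integrable_on {-1..1}"
      unfolding aN by (intro integrable_continuous_real continuous_intros cF) auto
    have i4: "(\<lambda>x. e * \<bar>F x\<bar>) integrable_on {-1..1}"
      by (intro integrable_continuous_real continuous_intros cF)
    have "I = integral {-1..1} (\<lambda>x. F x * sin (?t x) * (F x - P (cos (?t x))))"
    proof -
      have "integral {-1..1} (\<lambda>x. F x * sin (?t x) * (F x - P (cos (?t x)))) =
          integral {-1..1} (\<lambda>x. F x ^ 2 * sin (?t x) - F x * sin (?t x) * P (cos (?t x)))"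
        by (rule integral_cong) (simp add: algebra_simps power2_eq_square)
      also have "\<dots> = I - 0" unfolding I_def z0[symmetric] by (rule integral_diff[OF i2 i1])
      finally show ?thesis by simp
    qed
    also have "\<dots> \<le> integral {-1..1} (\<lambda>x. e * \<bar>F x\<bar>)"
    proof (rule integral_le[OF i3 i4])
      fix z :: real assume z: "z \<in> {-1..1}"
      have "F z * sin (?t z) * (F z - P (cos (?t z))) \<le> \<bar>F z * sin (?t z) * (F z - P (cos (?t z)))\<bar>"
        by simp
      also have "\<dots> = \<bar>F z\<bar> * sin (?t z) * \<bar>F z - P (cos (?t z))\<bar>"
        using sin_nn[OF z] by (simp add: abs_mult)
      also have "\<dots> \<le> \<bar>F z\<bar> * 1 * e"
        using sin_nn[OF z] close[OF z] by (intro mult_mono) auto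
      finally show "F z * sin (?t z) * (F z - P (cos (?t z))) \<le> e * \<bar>F z\<bar>" by (simp add: mult.commute)
    qed
    also have "\<dots> = e * M" unfolding M_def
      by (rule integral_mult[symmetric]) (intro integrable_continuous_real continuous_intros cF)
    finally show ?thesis .
  qed
  have "I \<le> 0"
  proof (rule field_le_epsilon)
    fix e :: real assume e: "e > 0"
    have "I \<le> (e / (M + 1)) * M" using Ile[of "e / (M+1)"] e M0 by simp
    also have "\<dots> \<le> e" using e M0 by (simp add: field_simps)
    finally show "I \<le> 0 + e" by simp
  qed
  moreover have "I \<ge> 0" unfolding I_def
    by (intro integral_nonneg integrable_continuous_real continuous_intros cF) (use sin_nn in auto)
  ultimately have "I = 0" by simp
  hence "\<forall>z\<in>{-1..1}. F z ^ 2 * sin (?t z) = 0" unfolding I_def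
    by (subst (asm) integral_eq_0_iff) (auto intro!: continuous_intros cF simp: sin_nn)
  hence "F x ^ 2 * sin (?t x) = 0" using x by auto
  moreover have "sin (?t x) > 0" using t_range_strict[OF x] by (intro sin_gt_zero) auto
  ultimately show ?thesis by simp
qed

lemma Icos:
  fixes j :: int
  shows "integral {-1..1} (\<lambda>x. cos (of_int j * (pi * (x + 1) / 2))) = (if j = 0 then 2 else 0)"
proof (cases "j = 0")
  case True
  thus ?thesis by simp
next
  case False
  define F where "F x = sin (of_int j * (pi * (x + 1) / 2)) * (2 / (of_int j * pi))" for x
  have d: "(F has_vector_derivative cos (of_int j * (pi * (x + 1) / 2))) (at x within {-1..1})" for x
  proof -
    have "(F has_real_derivative cos (of_int j * (pi * (x + 1) / 2))) (at x within {-1..1})"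
      unfolding F_def[abs_def] using False by (auto intro!: derivative_eq_intros simp: field_simps)
    thus ?thesis by (simp add: has_real_derivative_iff_has_vector_derivative)
  qed
  have "((\<lambda>x. cos (of_int j * (pi * (x + 1) / 2))) has_integral (F 1 - F (-1))) {-1..1}"
    by (rule fundamental_theorem_of_calculus) (use d in auto)
  moreover have "F 1 = 0"
  proof -
    have "sin (of_int j * (pi * (1 + 1) / 2)) = sin (pi * of_int j)" by (simp add: mult.commute)
    thus ?thesis by (simp add: F_def)
  qed
  moreover have "F (-1) = 0" by (simp add: F_def)
  ultimately show ?thesis using False by (simp add: integral_unique)
qed

definition phi :: "nat \<Rightarrow> real \<Rightarrow> real" where
  "phi n x = sin (real n * (pi * (x + 1) / 2))"

lemma phi_cont[continuous_intros]: "continuous_on S (phi n)"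
  unfolding phi_def by (intro continuous_intros) auto

lemma phi_bound: "\<bar>phi n x\<bar> \<le> 1" unfolding phi_def by simp

lemma phi_1: "phi n 1 = 0"
proof -
  have "sin (real n * (pi * (1 + 1) / 2)) = sin (real n * pi)" by simp
  thus ?thesis unfolding phi_def by simp
qed
lemma phi_m1: "phi n (-1) = 0" unfolding phi_def by simp

lemma ortho:
  assumes "n \<ge> 1" "m \<ge> 1"
  shows "integral {-1..1} (\<lambda>x. phi n x * phi m x) = (if n = m then 1 else 0)"
proof -
  have e: "phi n x * phi m x = (1/2) * cos (of_int (int n - int m) * (pi * (x + 1) / 2))
        + (-1/2) * cos (of_int (int n + int m) * (pi * (x + 1) / 2))" for x
  proof -
    have s: "phi n x * phi m x = (cos (real n * (pi * (x + 1) / 2) - real m * (pi * (x + 1) / 2))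
       - cos (real n * (pi * (x + 1) / 2) + real m * (pi * (x + 1) / 2))) / 2"
      unfolding phi_def by (rule sin_times_sin)
    have a1: "real n * (pi * (x + 1) / 2) - real m * (pi * (x + 1) / 2) = of_int (int n - int m) * (pi * (x + 1) / 2)"
      by (simp add: field_simps)
    have a2: "real n * (pi * (x + 1) / 2) + real m * (pi * (x + 1) / 2) = of_int (int n + int m) * (pi * (x + 1) / 2)"
      by (simp add: field_simps)
    show ?thesis unfolding s a1 a2 by simp
  qed
  have i1: "(\<lambda>x. cos (of_int j * (pi * (x + 1) / 2))) integrable_on {-1..1}" for j :: int
    by (intro integrable_continuous_real continuous_intros) auto
  have "integral {-1..1} (\<lambda>x. phi n x * phi m x) = (1/2) * integral {-1..1} (\<lambda>x. cos (of_int (int n - int m) * (pi * (x + 1) / 2)))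
        + (-1/2) * integral {-1..1} (\<lambda>x. cos (of_int (int n + int m) * (pi * (x + 1) / 2)))"
    unfolding e by (rule lin2[OF i1 i1])
  also have "\<dots> = (if n = m then 1 else 0)" unfolding Icos using assms by auto
  finally show ?thesis .
qed

context gf begin

definition "om n = real n * pi / 2"
definition "mu n = c0 - D * (om n)^2 + D * nu * (om n)^4"

lemma lam_o_eq: "lam_o D nu R (Suc k) = mu (2 * Suc k)"
proof -
  have "om (2 * Suc k) = real (Suc k) * pi" by (simp add: om_def)
  thus ?thesis unfolding lam_o_def mu_def c0_def by (simp add: power_mult_distrib)
qed

lemma lam_e_eq: "lam_e D nu R (Suc k) = mu (2 * k + 1)"
proof -
  have "om (2 * k + 1) = (real (Suc k) - 1/2) * pi" by (simp add: om_def field_simps)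
  thus ?thesis unfolding lam_e_def mu_def c0_def by (simp add: power_mult_distrib)
qed

lemma wo_eq: "w_o k x * w_o k y = phi (2 * k) x * phi (2 * k) y"
proof -
  have "phi (2 * k) z = (-1)^k * sin (real k * pi * z)" for z
  proof -
    have "real (2 * k) * (pi * (z + 1) / 2) = real k * pi * z + real k * pi" by (simp add: algebra_simps)
    thus ?thesis unfolding phi_def by (simp add: sin_add)
  qed
  thus ?thesis unfolding w_o_def by (simp add: power_mult_distrib[symmetric] algebra_simps flip: power_add)
qed

lemma we_eq: "w_e (Suc k) x * w_e (Suc k) y = phi (2 * k + 1) x * phi (2 * k + 1) y"
proof -
  have c1: "cos (real k * pi + pi / 2) = 0" by (simp add: cos_add)
  have s1: "sin (real k * pi + pi / 2) = (-1)^k" by (simp add: sin_add)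
  have "phi (2 * k + 1) z = (-1)^k * cos ((real (Suc k) - 1/2) * pi * z)" for z
  proof -
    have ae: "real (2 * k + 1) * (pi * (z + 1) / 2) = (real (Suc k) - 1/2) * pi * z + (real k * pi + pi / 2)"
      by (simp add: algebra_simps)
    show ?thesis unfolding phi_def ae sin_add c1 s1 by simp
  qed
  thus ?thesis unfolding w_e_def by (simp add: algebra_simps flip: power_add)
qed

definition "eps = D * nu - D^2 / (4 * c0)"

lemma eps_pos: "eps > 0"
proof -
  have "D^2 < 4 * D * nu * c0" using hdisc by (simp add: c0_def)
  hence "D^2 / (4 * c0) < D * nu" using c0_pos by (simp add: field_simps)
  thus ?thesis by (simp add: eps_def)
qed

lemma mu_ge: "mu n \<ge> eps * (om n)^4"
proof -
  have "mu n - eps * (om n)^4 = (2 * c0 - D * (om n)^2)^2 / (4 * c0)"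
    using c0_pos by (simp add: mu_def eps_def field_simps power2_eq_square power4_eq_xxxx)
  also have "\<dots> \<ge> 0" using c0_pos by simp
  finally show ?thesis by simp
qed

lemma mu_ge2: "n \<ge> 1 \<Longrightarrow> mu n \<ge> eps * (real n)^2"
proof -
  assume n: "n \<ge> 1"
  have "om n \<ge> real n" unfolding om_def using pi_gt3 n by (simp add: field_simps)
  hence "(om n)^4 \<ge> (real n)^4" by (intro power_mono) auto
  moreover have "(real n)^4 \<ge> (real n)^2" using n by (intro power_increasing) auto
  ultimately have "(om n)^4 \<ge> (real n)^2" by linarith
  hence "eps * (om n)^4 \<ge> eps * (real n)^2" using eps_pos by (intro mult_left_mono) auto
  thus ?thesis using mu_ge[of n] by linarith
qed

lemma mu_pos: "n \<ge> 1 \<Longrightarrow> mu n > 0"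
proof -
  assume "n \<ge> 1"
  hence "eps * (real n)^2 > 0" using eps_pos by simp
  thus ?thesis using mu_ge2[OF \<open>n \<ge> 1\<close>] by linarith
qed

end

context gf begin

definition "tm y k x = phi (2*k+2) x * phi (2*k+2) y / mu (2*k+2) + phi (2*k+1) x * phi (2*k+1) y / mu (2*k+1)"
definition "Mb k = 1 / mu (2*k+2) + 1 / mu (2*k+1)"
definition "Ser y x = (\<Sum>k. tm y k x)"

lemma one_term_bound: "m > 0 \<Longrightarrow> \<bar>phi a x * phi a y / m\<bar> \<le> 1 / m"
proof -
  assume m: "m > 0"
  have h: "\<bar>phi a x * phi a y\<bar> \<le> 1"
    using mult_le_one[OF phi_bound[of a x] abs_ge_zero phi_bound[of a y]] by (simp add: abs_mult)
  show ?thesis using divide_right_mono[OF h, of m] m by (simp add: abs_divide)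
qed

lemma tm_bound: "\<bar>tm y k x\<bar> \<le> Mb k"
proof -
  have m1: "mu (2*k+2) > 0" "mu (2*k+1) > 0" by (auto intro: mu_pos)
  show ?thesis unfolding tm_def Mb_def
    by (rule order_trans[OF abs_triangle_ineq add_mono[OF one_term_bound[OF m1(1)] one_term_bound[OF m1(2)]]])
qed

lemma inv_mu2:
  assumes "n \<ge> Suc k"
  shows "1 / mu n \<le> (1 / eps) * inverse (real (Suc k) ^ 2)"
proof -
  have n1: "n \<ge> 1" using assms by simp
  have "real (Suc k) ^ 2 \<le> real n ^ 2" using assms by (intro power_mono) auto
  hence "eps * real (Suc k) ^ 2 \<le> eps * real n ^ 2" using eps_pos by (intro mult_left_mono) auto
  also have "\<dots> \<le> mu n" by (rule mu_ge2[OF n1])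
  finally have le: "eps * real (Suc k) ^ 2 \<le> mu n" .
  have pos: "0 < eps * real (Suc k) ^ 2" using eps_pos by simp
  have "1 / mu n \<le> 1 / (eps * real (Suc k) ^ 2)"
    by (rule divide_left_mono[OF le]) (use pos le in auto)
  also have "\<dots> = (1 / eps) * inverse (real (Suc k) ^ 2)" by (simp add: field_simps)
  finally show ?thesis .
qed

lemma Mb_summable: "summable Mb"
proof (rule summable_comparison_test)
  have s0: "summable (\<lambda>n. inverse (real n ^ 2))" by (rule inverse_power_summable) auto
  hence "summable (\<lambda>n. inverse (real (Suc n) ^ 2))" by (subst summable_Suc_iff)
  thus "summable (\<lambda>k. (2 / eps) * inverse (real (Suc k) ^ 2))" by (rule summable_mult)
  show "\<exists>N. \<forall>n\<ge>N. norm (Mb n) \<le> 2 / eps * inverse (real (Suc n) ^ 2)"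
  proof (intro exI allI impI)
    fix k :: nat
    have "Mb k \<le> (1 / eps) * inverse (real (Suc k) ^ 2) + (1 / eps) * inverse (real (Suc k) ^ 2)"
      unfolding Mb_def by (intro add_mono inv_mu2) auto
    moreover have "Mb k \<ge> 0" using tm_bound[of 0 k 0] by linarith
    ultimately show "norm (Mb k) \<le> 2 / eps * inverse (real (Suc k) ^ 2)" by simp
  qed
qed

lemma tm_summable: "summable (\<lambda>k. tm y k x)"
  by (rule summable_comparison_test[OF _ Mb_summable]) (use tm_bound in auto)

lemma tm_cont[continuous_intros]: "continuous_on S (tm y k)"
proof -
  have "mu (2*k+2) \<noteq> 0" "mu (2*k+1) \<noteq> 0" using mu_pos[of "2*k+2"] mu_pos[of "2*k+1"] by auto
  thus ?thesis unfolding tm_def[abs_def] by (intro continuous_intros) auto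
qed

lemma Ser_cont: "continuous_on {-1..1} (Ser y)"
proof -
  have ul: "uniform_limit {-1..1} (\<lambda>N x. \<Sum>k<N. tm y k x) (\<lambda>x. \<Sum>k. tm y k x) sequentially"
    by (rule Weierstrass_m_test[OF _ Mb_summable]) (use tm_bound in auto)
  have "continuous_on {-1..1} (\<lambda>x. \<Sum>k. tm y k x)"
    by (rule uniform_limit_theorem[OF _ ul]) (auto intro!: always_eventually continuous_intros)
  thus ?thesis unfolding Ser_def[abs_def] .
qed

lemma tm_int:
  assumes n: "n \<ge> 1"
  shows "integral {-1..1} (\<lambda>x. tm y k x * phi n x) = (if k = (n-1) div 2 then phi n y / mu n else 0)"
proof -
  define a where "a = phi (2*k+2) y / mu (2*k+2)"
  define b where "b = phi (2*k+1) y / mu (2*k+1)"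
  have e: "(\<lambda>x. tm y k x * phi n x) = (\<lambda>x. a * (phi (2*k+2) x * phi n x) + b * (phi (2*k+1) x * phi n x))"
    by (rule ext) (simp add: tm_def a_def b_def divide_inverse algebra_simps)
  have i: "(\<lambda>x. phi j x * phi n x) integrable_on {-1..1}" for j
    by (intro integrable_continuous_real continuous_intros)
  have "integral {-1..1} (\<lambda>x. tm y k x * phi n x) =
      a * integral {-1..1} (\<lambda>x. phi (2*k+2) x * phi n x) + b * integral {-1..1} (\<lambda>x. phi (2*k+1) x * phi n x)"
    unfolding e by (rule lin2[OF i i])
  also have "\<dots> = a * (if 2*k+2 = n then 1 else 0) + b * (if 2*k+1 = n then 1 else 0)"
    using ortho[of "2*k+2" n] ortho[of "2*k+1" n] n by simp
  also have "\<dots> = (if k = (n-1) div 2 then phi n y / mu n else 0)"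
  proof -
    consider (A) "n = 2*k+2" | (B) "n = 2*k+1" | (C) "n \<noteq> 2*k+2" "n \<noteq> 2*k+1" by blast
    thus ?thesis
    proof cases
      case A
      have "k = (n-1) div 2" using A by simp
      thus ?thesis using A by (simp add: a_def)
    next
      case B
      have "k = (n-1) div 2" using B by simp
      thus ?thesis using B by (simp add: b_def)
    next
      case C
      have "k \<noteq> (n-1) div 2" using C n by auto
      thus ?thesis using C by simp
    qed
  qed
  finally show ?thesis .
qed

lemma Ser_coef:
  assumes n: "n \<ge> 1"
  shows "integral {-1..1} (\<lambda>x. Ser y x * phi n x) = phi n y / mu n"
proof -
  let ?f = "\<lambda>k x. tm y k x * phi n x"
  have bnd: "norm (?f k x) \<le> Mb k" if "x \<in> {-1..1}" for k x
  proof -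
    have "\<bar>tm y k x\<bar> * \<bar>phi n x\<bar> \<le> Mb k * 1"
      by (intro mult_mono tm_bound phi_bound) (use tm_bound[of y k x] in auto)
    thus ?thesis by (simp add: abs_mult)
  qed
  have ul: "uniform_limit {-1..1} (\<lambda>N x. \<Sum>k<N. ?f k x) (\<lambda>x. \<Sum>k. ?f k x) sequentially"
    by (rule Weierstrass_m_test[OF bnd Mb_summable])
  have c: "continuous_on {-1..1} (\<lambda>x. \<Sum>k<N. ?f k x)" for N
    by (intro continuous_intros)
  obtain I J where I: "\<And>N. ((\<lambda>x. \<Sum>k<N. ?f k x) has_integral I N) {-1..1}"
    and J: "((\<lambda>x. \<Sum>k. ?f k x) has_integral J) {-1..1}" and lim: "I \<longlonglongrightarrow> J"
    by (rule uniform_limit_integral[OF ul c]) auto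
  have IN: "I N = phi n y / mu n" if N: "N > (n-1) div 2" for N
  proof -
    have "I N = integral {-1..1} (\<lambda>x. \<Sum>k<N. ?f k x)" using integral_unique[OF I[of N]] by simp
    also have "\<dots> = (\<Sum>k<N. integral {-1..1} (?f k))"
      by (rule integral_sum) (auto intro!: integrable_continuous_real continuous_intros)
    also have "\<dots> = (\<Sum>k<N. if k = (n-1) div 2 then phi n y / mu n else 0)"
      using tm_int[OF n] by simp
    also have "\<dots> = phi n y / mu n" using N by simp
    finally show ?thesis .
  qed
  have "eventually (\<lambda>N. I N = phi n y / mu n) sequentially"
    unfolding eventually_sequentially using IN by (intro exI[of _ "Suc ((n-1) div 2)"]) auto
  hence "I \<longlonglongrightarrow> phi n y / mu n" by (rule tendsto_eventually)
  hence Jv: "J = phi n y / mu n" using LIMSEQ_unique[OF lim] by simp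
  have "(\<lambda>x. \<Sum>k. ?f k x) = (\<lambda>x. Ser y x * phi n x)"
    by (rule ext) (simp add: Ser_def suminf_mult2[OF tm_summable])
  thus ?thesis using integral_unique[OF J] Jv by simp
qed

end

lemma Im_ofr_mult: "Im (complex_of_real a * w) = a * Im w" by simp

lemma vd_Im2:
  assumes "(F has_vector_derivative F') (at x within S)"
  shows "((\<lambda>x. k * Im (C * (C2 * F x))) has_real_derivative (k * Im (C * (C2 * F')))) (at x within S)"
  using vd_Im[OF assms, of k "C * C2"] by (simp add: mult.assoc)

context gf begin

lemma phSf: "Sf (of_real (om n)) (of_real (om n)) t = of_real (phi n t)"
proof -
  have eq: "complex_of_real (om n) * of_real t + of_real (om n) = of_real (real n * (pi * (t + 1) / 2))"
    by (simp add: om_def field_simps)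
  show ?thesis unfolding Sf_def phi_def eq by (rule sin_of_real)
qed

lemma green_coef:
  assumes y: "y \<in> {-1..1}" and n: "n \<ge> 1"
  shows "integral {-1..1} (\<lambda>x. Green D nu R p x y * phi n x) = phi n y / mu n"
proof -
  define w where "w = complex_of_real (om n)"
  define be where "be = inverse (p^2 - w^2)"
  have w2: "w^2 = complex_of_real ((om n)^2)" by (simp add: w_def)
  have pw: "p^2 - w^2 = Complex (a0 - (om n)^2) b0" unfolding w2 p2 by (simp add: complex_eq_iff)
  have bnz: "p^2 - w^2 \<noteq> 0" using b0_pos pw by (auto simp: complex_eq_iff)
  have be1: "be * (p^2 - w^2) = 1" using bnz by (simp add: be_def)
  have ph: "Sf w w t = of_real (phi n t)" for t unfolding w_def by (rule phSf)
  define FA where "FA t = be * (fb t * (w * Cf w w t) - fb' t * Sf w w t)" for t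
  define FB where "FB t = be * (fa t * (w * Cf w w t) - fa' t * Sf w w t)" for t
  have FA_d: "(FA has_vector_derivative (fb t * Sf w w t)) (at t within X)" for t X
  proof -
    have "(FA has_vector_derivative be * ((fb t * (w * - (w * Sf w w t)) + fb' t * (w * Cf w w t)) - (fb' t * (w * Cf w w t) + (- (p^2) * fb t) * Sf w w t))) (at t within X)"
      unfolding FA_def[abs_def]
      by (intro has_vector_derivative_mult_right has_vector_derivative_diff has_vector_derivative_mult fb_d fb'_d Sf_deriv Cf_deriv)
    moreover have "be * ((fb t * (w * - (w * Sf w w t)) + fb' t * (w * Cf w w t)) - (fb' t * (w * Cf w w t) + (- (p^2) * fb t) * Sf w w t))
        = (be * (p^2 - w^2)) * (fb t * Sf w w t)" by (simp add: algebra_simps power2_eq_square)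
    ultimately show ?thesis unfolding be1 by simp
  qed
  have FB_d: "(FB has_vector_derivative (fa t * Sf w w t)) (at t within X)" for t X
  proof -
    have "(FB has_vector_derivative be * ((fa t * (w * - (w * Sf w w t)) + fa' t * (w * Cf w w t)) - (fa' t * (w * Cf w w t) + (- (p^2) * fa t) * Sf w w t))) (at t within X)"
      unfolding FB_def[abs_def]
      by (intro has_vector_derivative_mult_right has_vector_derivative_diff has_vector_derivative_mult fa_d fa'_d Sf_deriv Cf_deriv)
    moreover have "be * ((fa t * (w * - (w * Sf w w t)) + fa' t * (w * Cf w w t)) - (fa' t * (w * Cf w w t) + (- (p^2) * fa t) * Sf w w t))
        = (be * (p^2 - w^2)) * (fa t * Sf w w t)" by (simp add: algebra_simps power2_eq_square)
    ultimately show ?thesis unfolding be1 by simp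
  qed
  have FAm1: "FA (-1) = 0" unfolding FA_def fbm1 ph phi_m1 by simp
  have FB1: "FB 1 = 0" unfolding FB_def fa1 ph phi_1 by simp
  have iA: "((\<lambda>t. fb t * Sf w w t) has_integral (FA y - FA (-1))) {-1..y}"
    by (rule fundamental_theorem_of_calculus) (use y FA_d in auto)
  have iB: "((\<lambda>t. fa t * Sf w w t) has_integral (FB 1 - FB y)) {y..1}"
    by (rule fundamental_theorem_of_calculus) (use y FB_d in auto)
  have AA: "Ar (phi n) y = FA y" unfolding Ar_def ph[symmetric] using integral_unique[OF iA] FAm1 by simp
  have BB: "Br (phi n) y = - FB y" unfolding Br_def ph[symmetric] using integral_unique[OF iB] FB1 by simp
  have VV: "Vr (phi n) y = be * Sf w w y * (fa' y * fb y - fb' y * fa y)"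
    unfolding Vr_def AA BB FA_def FB_def by (simp add: algebra_simps)
  have "cc * Vr (phi n) y = - (cc * (p * sin (2 * p))) * be * Sf w w y"
    unfolding VV wronsk by (simp add: algebra_simps)
  also have "\<dots> = - 2 * be * of_real (phi n y)" unfolding cc_mult ph by simp
  finally have cV: "cc * Vr (phi n) y = - 2 * be * of_real (phi n y)" .
  define Q where "Q = (a0 - (om n)^2)^2 + b0^2"
  have Qpos: "Q > 0" unfolding Q_def using b0_pos by (simp add: add_nonneg_pos)
  have Imbe: "Im be = - b0 / Q" unfolding be_def pw Q_def by simp
  have muQ: "mu n = D * nu * Q"
  proof -
    have "(om n ^ 2) ^ 2 = om n ^ 4" by (simp flip: power_mult)
    thus ?thesis unfolding Q_def mu_eq mu_def by simp
  qed
  have "integral {-1..1} (\<lambda>x. Green D nu R p x y * phi n x) = integral {-1..1} (\<lambda>x. Green D nu R p y x * phi n x)"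
    using green_sym by simp
  also have "\<dots> = K * Im (cc * Vr (phi n) y)" by (rule repr[OF phi_cont y])
  also have "\<dots> = K * (2 * b0 / Q) * phi n y" unfolding cV using Imbe by simp
  also have "\<dots> = phi n y / mu n" unfolding muQ K_def b0_def using sd_pos hD hnu Qpos
    by (simp add: field_simps)
  finally show ?thesis .
qed

lemma green_cont2: "continuous_on {-1..1} (\<lambda>x. Green D nu R p x y)"
  unfolding green_form fa_def fb_def Sf_def by (intro continuous_intros)

lemma green_edge: "y \<in> {-1..1} \<Longrightarrow> Green D nu R p 1 y = 0" "y \<in> {-1..1} \<Longrightarrow> Green D nu R p (-1) y = 0"
proof -
  assume y: "y \<in> {-1..1}"
  have "max 1 y = 1" "min (-1) y = -1" using y by auto
  thus "Green D nu R p 1 y = 0" "Green D nu R p (-1) y = 0" unfolding green_form by (simp_all add: fa1 fbm1)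
qed

lemma Ser_edge: "Ser y 1 = 0" "Ser y (-1) = 0"
  unfolding Ser_def tm_def by (simp_all add: phi_1 phi_m1)

lemma ser_green:
  assumes x: "x \<in> {-1..1}" and y: "y \<in> {-1..1}"
  shows "Ser y x = Green D nu R p x y"
proof -
  define F where "F x = Green D nu R p x y - Ser y x" for x
  have cF: "continuous_on {-1..1} F" unfolding F_def by (intro continuous_intros green_cont2 Ser_cont)
  have h: "integral {-1..1} (\<lambda>x. F x * sin (real n * (pi * (x + 1) / 2))) = 0" for n
  proof (cases "n = 0")
    case True thus ?thesis by simp
  next
    case False
    hence n: "n \<ge> 1" by simp
    have i1: "(\<lambda>x. Green D nu R p x y * phi n x) integrable_on {-1..1}"
      by (intro integrable_continuous_real continuous_intros green_cont2)
    have i2: "(\<lambda>x. Ser y x * phi n x) integrable_on {-1..1}"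
      by (intro integrable_continuous_real continuous_intros Ser_cont)
    have "integral {-1..1} (\<lambda>x. F x * phi n x) =
        integral {-1..1} (\<lambda>x. Green D nu R p x y * phi n x - Ser y x * phi n x)"
      unfolding F_def by (simp add: algebra_simps)
    also have "\<dots> = 0" unfolding integral_diff[OF i1 i2] green_coef[OF y n] Ser_coef[OF n] by simp
    finally show ?thesis unfolding phi_def .
  qed
  show ?thesis
  proof (cases "x = 1 \<or> x = -1")
    case True
    thus ?thesis using green_edge[OF y] Ser_edge by auto
  next
    case False
    hence "-1 < x" "x < 1" using x by auto
    from completeness[OF cF h this] show ?thesis unfolding F_def by simp
  qed
qed

end

context gf begin

lemma term_eq: "w_o (Suc k) x * w_o (Suc k) y / lam_o D nu R (Suc k)
              + w_e (Suc k) x * w_e (Suc k) y / lam_e D nu R (Suc k) = tm y k x"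
proof -
  have "2 * Suc k = 2 * k + 2" by simp
  thus ?thesis unfolding wo_eq we_eq lam_o_eq lam_e_eq tm_def by simp
qed

lemma part1:
  assumes x: "x \<in> {-1..1}" and y: "y \<in> {-1..1}"
  shows "(\<lambda>k. w_o (Suc k) x * w_o (Suc k) y / lam_o D nu R (Suc k)
              + w_e (Suc k) x * w_e (Suc k) y / lam_e D nu R (Suc k)) sums Green D nu R p x y"
  unfolding term_eq ser_green[OF x y, symmetric] Ser_def using tm_summable by (rule summable_sums)

lemma part2:
  assumes r: "continuous_on {-1..1} r"
  shows "let v = (\<lambda>x. integral {-1..1} (\<lambda>y. Green D nu R p x y * r y)) in
            \<exists>v1 v2 v3 v4 :: real \<Rightarrow> real.
              (\<forall>x \<in> {-1..1}.
                 (v has_real_derivative v1 x) (at x within {-1..1}) \<and>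
                 (v1 has_real_derivative v2 x) (at x within {-1..1}) \<and>
                 (v2 has_real_derivative v3 x) (at x within {-1..1}) \<and>
                 (v3 has_real_derivative v4 x) (at x within {-1..1}) \<and>
                 (1 + D * R) * v x + D * v2 x + D * nu * v4 x = r x) \<and>
              continuous_on {-1..1} v4 \<and>
              v (-1) = 0 \<and> v 1 = 0 \<and> v2 (-1) = 0 \<and> v2 1 = 0"
proof -
  define v where "v = (\<lambda>x. integral {-1..1} (\<lambda>y. Green D nu R p x y * r y))"
  define v1 where "v1 x = K * Im (cc * V1 r x)" for x
  define v2 where "v2 x = K * Im (- (p^2) * (cc * Vr r x))" for x
  define v3 where "v3 x = K * Im (- (p^2) * (cc * V1 r x))" for x
  define v4 where "v4 x = K * Im (p^4 * (cc * Vr r x)) + 2 * K * Im (p^2) * r x" for x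
  have vrep: "v x = K * Im (cc * Vr r x)" if "x \<in> {-1..1}" for x
    unfolding v_def by (rule repr[OF r that])
  have key: "2 * D * nu * K * Im (p^2) = 1"
    unfolding p2 K_def b0_def using sd_pos hD hnu by simp
  have cm: "cc * (p * sin (2 * p) * z) = 2 * z" for z using cc_mult by (simp add: algebra_simps)
  have main: "(v has_real_derivative v1 x) (at x within {-1..1}) \<and>
                 (v1 has_real_derivative v2 x) (at x within {-1..1}) \<and>
                 (v2 has_real_derivative v3 x) (at x within {-1..1}) \<and>
                 (v3 has_real_derivative v4 x) (at x within {-1..1}) \<and>
                 (1 + D * R) * v x + D * v2 x + D * nu * v4 x = r x" if x: "x \<in> {-1..1}" for x
  proof (intro conjI)
    show "(v has_real_derivative v1 x) (at x within {-1..1})"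
      unfolding v1_def
      by (rule deriv_transfer[OF vd_Im[OF Vr_d[OF r x]] x]) (simp add: vrep)
    have "(v1 has_real_derivative K * Im (cc * (- (p^2) * Vr r x - p * sin (2 * p) * of_real (r x)))) (at x within {-1..1})"
      unfolding v1_def[abs_def] by (rule vd_Im[OF V1_d[OF r x]])
    moreover have "K * Im (cc * (- (p^2) * Vr r x - p * sin (2 * p) * of_real (r x))) = v2 x"
    proof -
      have "cc * (- (p^2) * Vr r x - p * sin (2 * p) * of_real (r x)) = - (p^2) * (cc * Vr r x) - cc * (p * sin (2 * p) * of_real (r x))"
        by (simp add: algebra_simps)
      also have "\<dots> = - (p^2) * (cc * Vr r x) - of_real (2 * r x)" unfolding cm by simp
      finally show ?thesis unfolding v2_def by simp
    qed
    ultimately show "(v1 has_real_derivative v2 x) (at x within {-1..1})" by simp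
    show "(v2 has_real_derivative v3 x) (at x within {-1..1})"
      unfolding v2_def[abs_def] v3_def by (rule vd_Im2[OF Vr_d[OF r x]])
    have "(v3 has_real_derivative K * Im (- (p^2) * (cc * (- (p^2) * Vr r x - p * sin (2 * p) * of_real (r x))))) (at x within {-1..1})"
      unfolding v3_def[abs_def] by (rule vd_Im2[OF V1_d[OF r x]])
    moreover have "K * Im (- (p^2) * (cc * (- (p^2) * Vr r x - p * sin (2 * p) * of_real (r x)))) = v4 x"
    proof -
      have "- (p^2) * (cc * (- (p^2) * Vr r x - p * sin (2 * p) * of_real (r x))) =
          p^4 * (cc * Vr r x) + p^2 * (cc * (p * sin (2 * p) * of_real (r x)))"
        by (simp add: algebra_simps power2_eq_square power4_eq_xxxx)
      also have "\<dots> = p^4 * (cc * Vr r x) + of_real (2 * r x) * p^2" unfolding cm by (simp add: algebra_simps)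
      finally have E: "- (p^2) * (cc * (- (p^2) * Vr r x - p * sin (2 * p) * of_real (r x))) =
          p^4 * (cc * Vr r x) + of_real (2 * r x) * p^2" .
      show ?thesis unfolding E plus_complex.sel Im_ofr_mult v4_def by (simp add: algebra_simps)
    qed
    ultimately show "(v3 has_real_derivative v4 x) (at x within {-1..1})" by simp
    define Z where "Z = cc * Vr r x"
    have ch: "of_real c0 * Z - of_real D * (p^2 * Z) + of_real (D * nu) * (p^4 * Z) = 0"
    proof -
      have "of_real c0 * Z - of_real D * (p^2 * Z) + of_real (D * nu) * (p^4 * Z) =
          (of_real (D * nu) * p^4 - of_real D * p^2 + of_real c0) * Z" by (simp add: algebra_simps)
      thus ?thesis unfolding char_eq by simp
    qed
    have chI: "c0 * Im Z - D * Im (p^2 * Z) + D * nu * Im (p^4 * Z) = 0"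
    proof -
      have "Im (of_real c0 * Z - of_real D * (p^2 * Z) + of_real (D * nu) * (p^4 * Z)) = 0" unfolding ch by simp
      thus ?thesis by (simp only: Im_ofr_mult minus_complex.sel plus_complex.sel)
    qed
    have "(1 + D * R) * v x + D * v2 x + D * nu * v4 x =
        K * (c0 * Im Z - D * Im (p^2 * Z) + D * nu * Im (p^4 * Z)) + (2 * D * nu * K * Im (p^2)) * r x"
      unfolding vrep[OF x] v2_def v4_def Z_def[symmetric] c0_def by (simp add: algebra_simps)
    also have "\<dots> = r x" unfolding chI key by simp
    finally show "(1 + D * R) * v x + D * v2 x + D * nu * v4 x = r x" .
  qed
  have cV: "continuous_on {-1..1} (Vr r)"
    by (rule continuous_on_vector_derivative) (use Vr_d[OF r] in blast)
  have c4: "continuous_on {-1..1} v4"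
    unfolding v4_def[abs_def] by (intro continuous_intros cV r)
  have bc: "v (-1) = 0" "v 1 = 0" "v2 (-1) = 0" "v2 1 = 0"
    using vrep[of "-1"] vrep[of 1] by (simp_all add: v2_def Vr_m1 Vr_1)
  show ?thesis unfolding Let_def v_def[symmetric]
    by (intro exI[of _ v1] exI[of _ v2] exI[of _ v3] exI[of _ v4] conjI ballI main c4 bc)
qed

end

theorem mainTheorem2:
  fixes \<Delta> \<nu> R :: real and p :: complex
  assumes hD: "\<Delta> > 0" and hnu: "\<nu> > 0"
    and hdisc: "\<Delta>^2 - 4 * \<Delta> * \<nu> * (1 + \<Delta> * R) < 0"
    and hp: "p^2 = psq_plus \<Delta> \<nu> R"
  shows "(\<forall>x \<in> {-1..1}. \<forall>y \<in> {-1..1}.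
           (\<lambda>k. w_o (Suc k) x * w_o (Suc k) y / lam_o \<Delta> \<nu> R (Suc k)
              + w_e (Suc k) x * w_e (Suc k) y / lam_e \<Delta> \<nu> R (Suc k))
           sums Green \<Delta> \<nu> R p x y)
       \<and> (\<forall>r :: real \<Rightarrow> real. continuous_on {-1..1} r \<longrightarrow>
           (let v = (\<lambda>x. integral {-1..1} (\<lambda>y. Green \<Delta> \<nu> R p x y * r y)) in
            \<exists>v1 v2 v3 v4 :: real \<Rightarrow> real.
              (\<forall>x \<in> {-1..1}.
                 (v has_real_derivative v1 x) (at x within {-1..1}) \<and>
                 (v1 has_real_derivative v2 x) (at x within {-1..1}) \<and>
                 (v2 has_real_derivative v3 x) (at x within {-1..1}) \<and>
                 (v3 has_real_derivative v4 x) (at x within {-1..1}) \<and>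
                 (1 + \<Delta> * R) * v x + \<Delta> * v2 x + \<Delta> * \<nu> * v4 x = r x) \<and>
              continuous_on {-1..1} v4 \<and>
              v (-1) = 0 \<and> v 1 = 0 \<and> v2 (-1) = 0 \<and> v2 1 = 0))"
proof -
  interpret gf \<Delta> \<nu> R p using assms by unfold_locales
  show ?thesis using part1 part2 by blast
qed

end
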